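(* Let $m\ge2$, $K$ an algebraic number field, $a(z)\in K[z]$ monic of degree $m$, $b(z)\in K[z]$ of degree $\le m-1$ with $z^{m-1}$-coefficient $b_{m-1}$, with $a(z)=\prod_{i=1}^m(z-\alpha_i)$, $\alpha_i\in K$ pairwise distinct, $s_i:=b(\alpha_i)/a'(\alpha_i)\in\mathbb{Q}\setminus\mathbb{Z}_{\le-1}$, $b_{m-1}\notin\mathbb{Z}_{<-1}$, and let $L=-a(z)\frac{d}{dz}+b(z)$. Let $f(z)=\sum_{k=0}^\infty f_k/z^{k+1}\in K[[1/z]]$ satisfy $L\cdot f(z)\in K[z]$. Then there exists a positive integer $D$ depending only on $f$ such that for every non-Archimedean place $v$ of $K$ and every positive integer $n$, \[\max_{0\le k\le n}\{|f_k|_v\}\le|D|_v^{-1}\,\mathrm{H}_v(\boldsymbol\alpha)^n\prod_{i=1}^m|\mu_n(s_i)|_v^{-1}\cdot|d_n(b_{m-1})|_v^{-1}.\]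
   Context: $L\cdot f=-af'+bf$ with termwise differentiation. Absolute values normalized: $|p|_v=p^{-[K_v:\mathbb{Q}_p]/[K:\mathbb{Q}]}$ for $v\mid p$. $\boldsymbol\alpha=(\alpha_1,\ldots,\alpha_m)$ and $\mathrm{H}_v(\boldsymbol\alpha)=\max\{1,|\alpha_1|_v,\ldots,|\alpha_m|_v\}$. For $s\in\mathbb{Q}$, $\mu_n(s)=\mathrm{den}(s)^n\prod_{q\text{ prime},\,q\mid\mathrm{den}(s)}q^{\lfloor n/(q-1)\rfloor}$; for $b\in\mathbb{Q}\setminus\mathbb{Z}_{\le-1}$, $d_n(b)$ is the least positive integer $d$ with $d/(b+i)\in\mathbb{Z}$ for $1\le i\le n+1$. *)

theory Defs
  imports "HOL-Computational_Algebra.Computational_Algebra"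
begin

definition number_field :: "'a::field_char_0 itself \<Rightarrow> bool" where
  "number_field _ \<longleftrightarrow>
     (\<exists>B::'a set. finite B \<and> (\<forall>x::'a. \<exists>c::'a \<Rightarrow> rat. x = (\<Sum>e\<in>B. of_rat (c e) * e)))"

definition nonarch_abs :: "('a::field \<Rightarrow> real) \<Rightarrow> bool" where
  "nonarch_abs v \<longleftrightarrow>
     (\<forall>x. 0 \<le> v x) \<and> (\<forall>x. v x = 0 \<longleftrightarrow> x = 0) \<and>
     (\<forall>x y. v (x * y) = v x * v y) \<and>
     (\<forall>x y. v (x + y) \<le> max (v x) (v y)) \<and>
     (\<exists>x. x \<noteq> 0 \<and> v x \<noteq> 1)"

text \<open>Coefficient of z^(-N-1) in L f = -a f' + b f, where f = sum_k f_k / z^(k+1),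
  differentiated termwise.\<close>
definition L_coeff :: "'a::field_char_0 poly \<Rightarrow> 'a poly \<Rightarrow> (nat \<Rightarrow> 'a) \<Rightarrow> nat \<Rightarrow> 'a" where
  "L_coeff a b f N =
     (\<Sum>j\<le>degree a. of_nat (j + N) * coeff a j * f (j + N - 1)) +
     (\<Sum>j\<le>degree b. coeff b j * f (j + N))"

definition L_image_poly :: "'a::field_char_0 poly \<Rightarrow> 'a poly \<Rightarrow> (nat \<Rightarrow> 'a) \<Rightarrow> bool" where
  "L_image_poly a b f \<longleftrightarrow> (\<forall>N. L_coeff a b f N = 0)"

definition den_rat :: "rat \<Rightarrow> nat" where
  "den_rat s = nat (snd (quotient_of s))"

definition mu :: "nat \<Rightarrow> rat \<Rightarrow> nat" where
  "mu n s = den_rat s ^ n * (\<Prod>q\<in>{q. prime q \<and> q dvd den_rat s}. q ^ (n div (q - 1)))"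

definition dn :: "nat \<Rightarrow> rat \<Rightarrow> nat" where
  "dn n b = (LEAST d::nat. 0 < d \<and> (\<forall>i\<in>{1..n+1}. of_nat d / (b + of_nat i) \<in> \<int>))"

definition height_v :: "('a \<Rightarrow> real) \<Rightarrow> nat \<Rightarrow> (nat \<Rightarrow> 'a) \<Rightarrow> real" where
  "height_v v m \<alpha> = Max (insert 1 ((\<lambda>i. v (\<alpha> i)) ` {1..m}))"

end

theory Submission
  imports Defs "HOL-Number_Theory.Cong"
begin


lemma na_nonneg: "nonarch_abs v \<Longrightarrow> 0 \<le> v x" unfolding nonarch_abs_def by auto
lemma na_zero: "nonarch_abs v \<Longrightarrow> v x = 0 \<longleftrightarrow> x = 0" unfolding nonarch_abs_def by auto
lemma na_mult: "nonarch_abs v \<Longrightarrow> v (x * y) = v x * v y" unfolding nonarch_abs_def by auto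
lemma na_add: "nonarch_abs v \<Longrightarrow> v (x + y) \<le> max (v x) (v y)" unfolding nonarch_abs_def by auto

lemma na_one: assumes "nonarch_abs v" shows "v 1 = 1"
proof -
  have "v 1 = v 1 * v 1" using na_mult[OF assms, of 1 1] by simp
  moreover have "v 1 \<noteq> 0" using na_zero[OF assms, of 1] by simp
  ultimately show ?thesis by (metis mult_cancel_left1)
qed

lemma na_minus_one: assumes "nonarch_abs v" shows "v (-1) = 1"
proof -
  have "v (-1) * v (-1) = 1" using na_mult[OF assms, of "-1" "-1"] na_one[OF assms] by simp
  moreover have "v (-1) \<ge> 0" using na_nonneg[OF assms] by auto
  ultimately show ?thesis by (metis abs_of_nonneg abs_square_eq_1 power2_eq_square)
qed

lemma na_uminus: assumes "nonarch_abs v" shows "v (- x) = v x"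
  using na_mult[OF assms, of "-1" x] na_minus_one[OF assms] by simp

lemma na_diff: assumes "nonarch_abs v" shows "v (x - y) \<le> max (v x) (v y)"
  using na_add[OF assms, of x "-y"] na_uminus[OF assms, of y] by simp

lemma na_sum_le: assumes "nonarch_abs v" "0 \<le> B" "\<And>i. i \<in> A \<Longrightarrow> v (f i) \<le> B"
  shows "v (sum f A) \<le> B"
  using assms(3)
proof (induction A rule: infinite_finite_induct)
  case (infinite A) then show ?case using na_zero[OF assms(1), of 0] assms(2) by simp
next
  case empty then show ?case using na_zero[OF assms(1), of 0] assms(2) by simp
next
  case (insert x F)
  have "v (sum f (insert x F)) = v (f x + sum f F)" using insert by simp
  also have "\<dots> \<le> max (v (f x)) (v (sum f F))" by (rule na_add[OF assms(1)])
  also have "\<dots> \<le> B" using insert by auto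
  finally show ?case .
qed

lemma na_prod: assumes "nonarch_abs v" shows "v (prod f A) = (\<Prod>i\<in>A. v (f i))"
proof (induction A rule: infinite_finite_induct)
  case (infinite A) then show ?case using na_one[OF assms] by simp
next
  case empty then show ?case using na_one[OF assms] by simp
next
  case (insert x F) then show ?case using na_mult[OF assms] by simp
qed

lemma na_power: assumes "nonarch_abs v" shows "v (x ^ n) = v x ^ n"
  by (induction n) (auto simp: na_one[OF assms] na_mult[OF assms])

lemma na_of_nat: assumes "nonarch_abs v" shows "v (of_nat n) \<le> 1"
proof (induction n)
  case 0 then show ?case using na_zero[OF assms, of 0] by simp
next
  case (Suc n)
  have "v (of_nat (Suc n)) = v (1 + of_nat n)" by simp
  also have "\<dots> \<le> max (v 1) (v (of_nat n))" by (rule na_add[OF assms])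
  also have "\<dots> \<le> 1" using Suc na_one[OF assms] by simp
  finally show ?case .
qed

lemma na_of_int: assumes "nonarch_abs v" shows "v (of_int z) \<le> 1"
proof (cases "z \<ge> 0")
  case True then show ?thesis using na_of_nat[OF assms, of "nat z"] by simp
next
  case False
  then have "of_int z = - (of_nat (nat (-z)) :: 'a)" by simp
  then show ?thesis using na_of_nat[OF assms, of "nat (-z)"] na_uminus[OF assms] by metis
qed

lemma na_Ints: assumes "nonarch_abs v" "x \<in> \<int>" shows "v x \<le> 1"
  using assms(2) na_of_int[OF assms(1)] by (auto elim: Ints_cases)

lemma na_inverse: assumes "nonarch_abs v" shows "v (inverse x) = inverse (v x)"
proof (cases "x = 0")
  case True then show ?thesis using na_zero[OF assms, of 0] by simp
next
  case False
  then have "v x * v (inverse x) = 1" using na_mult[OF assms, of x "inverse x"] na_one[OF assms] by simp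
  then show ?thesis by (metis inverse_unique)
qed

lemma na_pos: assumes "nonarch_abs v" "x \<noteq> 0" shows "0 < v x"
  using na_nonneg[OF assms(1), of x] na_zero[OF assms(1), of x] assms(2) by linarith

lemma na_le_inv: assumes "nonarch_abs v" "(d::'a::field) \<noteq> 0" "v (d * x) \<le> 1"
  shows "v x \<le> inverse (v d)"
proof -
  have "v d * v x \<le> 1" using assms(3) na_mult[OF assms(1)] by simp
  moreover have "0 < v d" using na_pos[OF assms(1,2)] .
  ultimately show ?thesis by (simp add: field_simps)
qed

lemma alg_bound:
  fixes x :: "'a::field_char_0"
  assumes "algebraic x"
  shows "\<exists>N::nat. N > 0 \<and> (\<forall>v. nonarch_abs v \<longrightarrow> v (of_nat N * x) \<le> 1)"
proof -
  obtain p where pZ: "\<And>i. coeff p i \<in> \<int>" and p0: "p \<noteq> 0" and px: "poly p x = 0"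
    using assms unfolding algebraic_def by blast
  define r where "r = degree p"
  define c where "c = lead_coeff p"
  have c0: "c \<noteq> 0" using p0 c_def by simp
  obtain ci where ci: "c = of_int ci" using pZ[of r] c_def r_def by (auto elim: Ints_cases)
  have ci0: "ci \<noteq> 0" using c0 ci by simp
  have r0: "r \<noteq> 0"
  proof
    assume "r = 0"
    then have "poly p x = c" using c_def r_def by (metis degree_0_id poly_const_conv)
    then show False using px c0 by simp
  qed
  define N where "N = nat \<bar>ci\<bar>"
  have N0: "N > 0" using ci0 N_def by simp
  have Nc: "v (of_nat N * x) = v (c * x)" if "nonarch_abs v" for v
  proof (cases "ci \<ge> 0")
    case True then show ?thesis using N_def ci by simp
  next
    case False
    then have "(of_nat N :: 'a) = - c" using N_def ci by simp
    then show ?thesis using na_uminus[OF that, of "c * x"] by simp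
  qed
  have main: "v (c * x) \<le> 1" if v: "nonarch_abs v" for v
  proof (rule ccontr)
    assume "\<not> v (c * x) \<le> 1"
    then have big: "v (c * x) > 1" by simp
    define y where "y = c * x"
    have "0 = c ^ (r - 1) * poly p x" using px by simp
    also have "\<dots> = c ^ (r - 1) * (\<Sum>i\<le>r. coeff p i * x ^ i)"
      by (simp add: poly_altdef r_def)
    also have "\<dots> = (\<Sum>i<r. c ^ (r - 1) * coeff p i * x ^ i) + c ^ (r - 1) * c * x ^ r"
      using c_def r_def by (simp add: lessThan_Suc_atMost[symmetric] distrib_left sum_distrib_left mult.assoc)
    also have "(\<Sum>i<r. c ^ (r - 1) * coeff p i * x ^ i) = (\<Sum>i<r. coeff p i * c ^ (r - 1 - i) * y ^ i)"
    proof (rule sum.cong)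
      fix i assume "i \<in> {..<r}"
      then have "c ^ (r - 1) = c ^ (r - 1 - i) * c ^ i" by (simp add: power_add[symmetric])
      then show "c ^ (r - 1) * coeff p i * x ^ i = coeff p i * c ^ (r - 1 - i) * y ^ i"
        by (simp add: y_def power_mult_distrib)
    qed simp
    also have "c ^ (r - 1) * c * x ^ r = y ^ r"
    proof -
      have "c ^ (r - 1) * c = c ^ r" using r0 by (metis power_minus_mult neq0_conv)
      then show ?thesis by (simp add: y_def power_mult_distrib)
    qed
    finally have "y ^ r = - (\<Sum>i<r. coeff p i * c ^ (r - 1 - i) * y ^ i)" by (simp add: eq_neg_iff_add_eq_0 add.commute)
    then have "v (y ^ r) = v (\<Sum>i<r. coeff p i * c ^ (r - 1 - i) * y ^ i)" using na_uminus[OF v] by metis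
    also have "\<dots> \<le> v y ^ (r - 1)"
    proof (rule na_sum_le[OF v])
      show "0 \<le> v y ^ (r - 1)" using big y_def by simp
      fix i assume i: "i \<in> {..<r}"
      have "coeff p i * c ^ (r - 1 - i) \<in> \<int>" using pZ c_def by (simp add: Ints_mult Ints_power)
      then have "v (coeff p i * c ^ (r - 1 - i)) \<le> 1" by (rule na_Ints[OF v])
      moreover have "v (y ^ i) \<le> v y ^ (r - 1)" using i big y_def
        by (simp add: na_power[OF v] power_increasing)
      moreover have "0 \<le> v (y ^ i)" by (rule na_nonneg[OF v])
      ultimately show "v (coeff p i * c ^ (r - 1 - i) * y ^ i) \<le> v y ^ (r - 1)"
      proof -
        have "v (coeff p i * c ^ (r - 1 - i)) * v (y ^ i) \<le> 1 * v (y ^ i)"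
          by (rule mult_right_mono) fact+
        then show ?thesis using na_mult[OF v] \<open>v (y ^ i) \<le> v y ^ (r - 1)\<close> by simp
      qed
    qed
    finally have "v y ^ r \<le> v y ^ (r - 1)" by (simp add: na_power[OF v])
    moreover have "v y ^ (r - 1) < v y ^ r" using big y_def r0 by (simp add: power_strict_increasing)
    ultimately show False by simp
  qed
  show ?thesis
  proof (intro exI[of _ N] conjI allI impI)
    show "N > 0" by (fact N0)
    fix v :: "'a \<Rightarrow> real" assume vv: "nonarch_abs v"
    show "v (of_nat N * x) \<le> 1" using main[OF vv] Nc[OF vv] by simp
  qed
qed


lemma nf_algebraic:
  assumes K: "number_field TYPE('a::field_char_0)"
  shows "algebraic (x::'a)"
proof -
  obtain B :: "'a set" where finB: "finite B"
    and spB: "\<And>y. \<exists>c::'a \<Rightarrow> rat. y = (\<Sum>e\<in>B. of_rat (c e) * e)"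
    using K unfolding number_field_def by blast
  interpret vs: vector_space "\<lambda>r (y::'a). of_rat r * y"
    by unfold_locales (simp_all add: algebra_simps of_rat_add of_rat_mult)
  have span: "y \<in> vs.span B" for y
  proof -
    obtain c where "y = (\<Sum>e\<in>B. of_rat (c e) * e)" using spB by blast
    moreover have "(\<Sum>e\<in>B. of_rat (c e) * e) \<in> vs.span B"
      by (intro vs.span_sum vs.span_scale vs.span_base)
    ultimately show ?thesis by simp
  qed
  define n where "n = card B"
  show ?thesis
  proof (cases "inj_on (\<lambda>i. x ^ i) {0..n}")
    case False
    then obtain i j where ij: "i \<in> {0..n}" "j \<in> {0..n}" "i \<noteq> j" "x ^ i = x ^ j"
      unfolding inj_on_def by blast
    define p :: "'a poly" where "p = monom 1 i - monom 1 j"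
    show ?thesis
    proof (rule algebraicI[of p])
      show "coeff p k \<in> \<int>" for k by (simp add: p_def coeff_monom)
      show "p \<noteq> 0"
      proof
        assume "p = 0"
        then have "coeff p i = 0" by simp
        then show False using ij(3) by (simp add: p_def coeff_monom)
      qed
      show "poly p x = 0" using ij(4) by (simp add: p_def poly_monom)
    qed
  next
    case True
    define S where "S = (\<lambda>i. x ^ i) ` {0..n}"
    have cardS: "card S = n + 1" using True S_def by (simp add: card_image)
    have finS: "finite S" using S_def by simp
    have "vs.dependent S"
    proof (rule ccontr)
      assume "\<not> vs.dependent S"
      then have "card S \<le> card B" using vs.independent_span_bound[OF finB] span by blast
      then show False using cardS n_def by simp
    qed
    then obtain u where u1: "\<exists>w\<in>S. u w \<noteq> 0" and u2: "(\<Sum>w\<in>S. of_rat (u w) * w) = 0"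
      using vs.dependent_finite[OF finS] by blast
    define p :: "'a poly" where "p = (\<Sum>i\<in>{0..n}. monom (of_rat (u (x ^ i))) i)"
    have cp: "coeff p k = (if k \<in> {0..n} then of_rat (u (x ^ k)) else 0)" for k
      by (simp add: p_def coeff_sum coeff_monom)
    show ?thesis
    proof (rule algebraicI'[of p])
      show "coeff p k \<in> \<rat>" for k by (simp add: cp)
      show "p \<noteq> 0"
      proof
        assume p0: "p = 0"
        obtain w where "w \<in> S" "u w \<noteq> 0" using u1 by blast
        then obtain k where "k \<in> {0..n}" "w = x ^ k" using S_def by blast
        then have "coeff p k \<noteq> 0" using \<open>u w \<noteq> 0\<close> by (simp add: cp)
        then show False using p0 by simp
      qed
      have "poly p x = (\<Sum>i\<in>{0..n}. of_rat (u (x ^ i)) * x ^ i)"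
        by (simp add: p_def poly_sum poly_monom)
      also have "\<dots> = (\<Sum>w\<in>S. of_rat (u w) * w)"
        unfolding S_def by (subst sum.reindex[OF True]) simp
      finally show "poly p x = 0" using u2 by simp
    qed
  qed
qed

lemma nf_bound:
  assumes K: "number_field TYPE('a::field_char_0)"
  shows "\<exists>N::nat. N > 0 \<and> (\<forall>v. nonarch_abs v \<longrightarrow> v (of_nat N * (x::'a)) \<le> 1)"
  using alg_bound[OF nf_algebraic[OF K]] .


lemma mult_fact_rec:
  assumes l: "prime (l::nat)"
  shows "multiplicity l (fact k :: nat) = k div l + multiplicity l (fact (k div l) :: nat)"
proof (induction k)
  case 0 then show ?case by simp
next
  case (Suc k)
  have l0: "l \<noteq> 0" "l > 1" using l prime_gt_1_nat by auto
  have fS: "(fact (Suc k) :: nat) = Suc k * fact k" by simp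
  have mS: "multiplicity l (fact (Suc k) :: nat) = multiplicity l (Suc k) + multiplicity l (fact k :: nat)"
    unfolding fS by (rule prime_elem_multiplicity_mult_distrib) (use l in auto)
  show ?case
  proof (cases "l dvd Suc k")
    case False
    then have "Suc k div l = k div l" by (simp add: div_Suc dvd_eq_mod_eq_0)
    then show ?thesis using mS Suc.IH not_dvd_imp_multiplicity_0[OF False] by simp
  next
    case True
    then obtain t where t: "Suc k = l * t" by blast
    then have t0: "t \<ge> 1" by (cases t) auto
    have d1: "Suc k div l = t" using t l0 by simp
    have d2: "k div l = t - 1"
    proof -
      have "Suc k div l = Suc (k div l)" using True by (simp add: div_Suc dvd_eq_mod_eq_0)
      then show ?thesis using d1 by simp
    qed
    have m1: "multiplicity l (Suc k) = Suc (multiplicity l t)"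
      unfolding t by (rule multiplicity_times_same) (use l0 t0 l in auto)
    have ft: "(fact t :: nat) = t * fact (t - 1)" using t0 by (cases t) auto
    have m2: "multiplicity l (fact t :: nat) = multiplicity l t + multiplicity l (fact (t - 1) :: nat)"
      unfolding ft by (rule prime_elem_multiplicity_mult_distrib) (use l t0 in auto)
    show ?thesis using mS Suc.IH m1 m2 d1 d2 t0 by simp
  qed
qed

lemma mult_fact_bound:
  assumes l: "prime (l::nat)"
  shows "multiplicity l (fact k :: nat) * (l - 1) \<le> k"
proof (induction k rule: less_induct)
  case (less k)
  have l1: "l > 1" using l prime_gt_1_nat by auto
  show ?case
  proof (cases "k = 0")
    case True then show ?thesis by simp
  next
    case False
    define t where "t = k div l"
    have tk: "t < k" using False l1 t_def by simp
    have IH: "multiplicity l (fact t :: nat) * (l - 1) \<le> t" using less tk by blast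
    have "multiplicity l (fact k :: nat) * (l - 1) = t * (l - 1) + multiplicity l (fact t :: nat) * (l - 1)"
      using mult_fact_rec[OF l, of k] t_def by (simp add: algebra_simps)
    also have "\<dots> \<le> t * (l - 1) + t" using IH by simp
    also have "\<dots> = t * l" using l1 by (simp add: algebra_simps)
    also have "\<dots> \<le> k" using t_def by simp
    finally show ?thesis .
  qed
qed

lemma fact_pow_dvd_bound:
  assumes l: "prime (l::nat)" and d: "l ^ e dvd (fact k :: nat)"
  shows "e \<le> k div (l - 1)"
proof -
  have "e \<le> multiplicity l (fact k :: nat)" by (rule multiplicity_geI) (use l d in auto)
  then have "e * (l - 1) \<le> k" using mult_fact_bound[OF l, of k]
    by (meson le_trans mult_le_mono1)
  moreover have "l - 1 > 0" using l prime_gt_1_nat by auto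
  ultimately show ?thesis by (simp add: less_eq_div_iff_mult_less_eq)
qed

lemma falling_fact_dvd: "(fact k :: int) dvd (\<Prod>i=0..<k. N - int i)"
proof -
  have "(\<Prod>i=0..<k. N - int i) = (-1) ^ k * pochhammer (- N) k"
    by (induction k) (simp_all add: pochhammer_Suc algebra_simps)
  then show ?thesis using fact_dvd_pochhammer[of k "- N"] by simp
qed

definition Qpart :: "nat \<Rightarrow> nat \<Rightarrow> nat" where
  "Qpart k d = (\<Prod>q\<in>{q. prime q \<and> q dvd d}. q ^ (k div (q - 1)))"

lemma mu_Qpart: "mu k s = den_rat s ^ k * Qpart k (den_rat s)"
  by (simp add: mu_def Qpart_def)

lemma fact_dvd_QP:
  fixes p d :: int
  assumes d0: "d > 0" and cop: "coprime p d"
  shows "(fact k :: int) dvd int (Qpart k (nat d)) * (\<Prod>i=0..<k. p - int i * d)"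
    (is "_ dvd ?Q * ?P")
proof (cases "?Q * ?P = 0")
  case True then show ?thesis by (metis dvd_0_right)
next
  case False
  show ?thesis
  proof (rule multiplicity_le_imp_dvd)
    show "(fact k :: int) \<noteq> 0" by simp
    fix l :: int assume l: "prime l"
    define e where "e = multiplicity l (fact k :: int)"
    have le: "l ^ e dvd fact k" unfolding e_def by (rule multiplicity_dvd)
    have l0: "l > 0" using l prime_gt_0_int by blast
    define L where "L = nat l"
    have lL: "l = int L" using l0 L_def by simp
    have L: "prime L" using l lL by (simp add: prime_int_nat_transfer)
    have Le: "L ^ e dvd (fact k :: nat)"
    proof -
      have "int (L ^ e) dvd int (fact k)" using le lL by (simp add: of_nat_fact)
      then show ?thesis by (simp only: int_dvd_int_iff)
    qed
    have "l ^ e dvd ?Q * ?P"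
    proof (cases "l dvd d")
      case True
      have Ld: "L dvd nat d" using True lL d0
        by (metis int_dvd_int_iff nat_0_le order_less_imp_le int_nat_eq)
      have fin: "finite {q. prime q \<and> q dvd nat d}" using d0 by (auto intro: finite_divisors_nat)
      have "e \<le> k div (L - 1)" by (rule fact_pow_dvd_bound[OF L Le])
      then have "L ^ e dvd L ^ (k div (L - 1))" by (rule le_imp_power_dvd)
      also have "L ^ (k div (L - 1)) dvd Qpart k (nat d)"
        unfolding Qpart_def by (rule dvd_prodI[OF fin]) (use L Ld in simp)
      finally have "int (L ^ e) dvd ?Q" by (simp only: int_dvd_int_iff)
      then show ?thesis using lL by simp
    next
      case False
      have cop2: "coprime d (l ^ e)" using False l
        by (simp add: coprime_commute prime_imp_coprime coprime_power_right_iff)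
           (metis coprime_commute prime_imp_coprime)
      obtain x where x: "[d * x = 1] (mod l ^ e)" using cong_solve_coprime_int[OF cop2] by blast
      define N where "N = x * p"
      have "[?P = (\<Prod>i=0..<k. d * (N - int i))] (mod l ^ e)"
      proof (rule cong_prod)
        fix i assume "i \<in> {0..<k}"
        have "[d * N = p] (mod l ^ e)"
          using cong_scalar_right[OF x, of p] by (simp add: N_def mult.assoc)
        then have "[d * N - int i * d = p - int i * d] (mod l ^ e)"
          by (rule cong_diff) simp
        then show "[p - int i * d = d * (N - int i)] (mod l ^ e)"
          by (simp add: algebra_simps cong_sym)
      qed
      moreover have "l ^ e dvd (\<Prod>i=0..<k. d * (N - int i))"
      proof -
        have "(\<Prod>i=0..<k. d * (N - int i)) = d ^ k * (\<Prod>i=0..<k. N - int i)"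
          by (simp add: prod.distrib)
        moreover have "l ^ e dvd (\<Prod>i=0..<k. N - int i)"
          using le falling_fact_dvd[of k N] by (rule dvd_trans)
        ultimately show ?thesis by simp
      qed
      ultimately have "l ^ e dvd ?P" using cong_dvd_iff by blast
      then show ?thesis by simp
    qed
    then show "multiplicity l (fact k :: int) \<le> multiplicity l (?Q * ?P)"
      unfolding e_def using multiplicity_geI[OF False] l not_prime_unit by blast
  qed
qed

lemma mu_gbinomial_int: "\<exists>z::int. of_nat (mu k s) * (s gchoose k) = of_int z"
proof -
  obtain p d where pd: "quotient_of s = (p, d)" by (cases "quotient_of s") auto
  have d0: "d > 0" using quotient_of_denom_pos[OF pd] .
  have cop: "coprime p d" using quotient_of_coprime[OF pd] .
  have s: "s = of_int p / of_int d" using quotient_of_div[OF pd] .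
  have den: "den_rat s = nat d" using pd by (simp add: den_rat_def)
  define Q where "Q = int (Qpart k (nat d))"
  define P where "P = (\<Prod>i=0..<k. p - int i * d)"
  obtain z where z: "Q * P = fact k * z" using fact_dvd_QP[OF d0 cop, of k] Q_def P_def by (auto elim: dvdE)
  have "fact k * (s gchoose k) = (\<Prod>i=0..<k. s - of_nat i)" by (rule gbinomial_mult_fact)
  also have "\<dots> = (\<Prod>i=0..<k. of_int (p - int i * d) / of_int d)"
    by (rule prod.cong) (use d0 in \<open>auto simp: s field_simps\<close>)
  also have "\<dots> = of_int P / of_int d ^ k"
    by (simp add: P_def prod_dividef)
  finally have eq: "fact k * (s gchoose k) = of_int P / of_int d ^ k" .
  have "of_nat (mu k s) * (s gchoose k) = of_int d ^ k * of_int Q * (s gchoose k)"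
    using d0 by (simp add: mu_Qpart den Q_def)
  also have "\<dots> = of_int Q * (of_int P / fact k)"
    using eq d0 by (simp add: field_simps)
  also have "\<dots> = of_int z"
  proof -
    have "(of_int Q * of_int P :: rat) = fact k * of_int z" using z by (metis of_int_fact of_int_mult)
    then show ?thesis by (simp add: field_simps)
  qed
  finally show ?thesis by blast
qed

lemma mu_pos: "mu k s > 0"
proof -
  have "den_rat s > 0" unfolding den_rat_def using quotient_of_denom_pos'[of s] by simp
  moreover have "Qpart k (den_rat s) > 0" unfolding Qpart_def
    by (rule prod_pos) (auto dest: prime_gt_0_nat)
  ultimately show ?thesis by (simp add: mu_Qpart)
qed

lemma mu_dvd:
  assumes "l + k \<le> n"
  shows "mu l s * mu k s dvd mu n s"
proof -
  define d where "d = den_rat s"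
  have d0: "d > 0" unfolding d_def den_rat_def using quotient_of_denom_pos'[of s] by simp
  have fin: "finite {q. prime q \<and> q dvd d}" using d0 by (auto intro: finite_divisors_nat)
  have "d ^ l * d ^ k dvd d ^ n" using assms by (simp add: power_add[symmetric] le_imp_power_dvd)
  moreover have "Qpart l d * Qpart k d dvd Qpart n d"
  proof -
    have "Qpart l d * Qpart k d = (\<Prod>q\<in>{q. prime q \<and> q dvd d}. q ^ (l div (q - 1) + k div (q - 1)))"
      unfolding Qpart_def by (simp add: prod.distrib[symmetric] power_add)
    also have "\<dots> dvd Qpart n d" unfolding Qpart_def
    proof (rule prod_dvd_prod)
      fix q
      have "l div (q - 1) + k div (q - 1) \<le> (l + k) div (q - 1)"
        by (subst div_add1_eq) simp
      also have "\<dots> \<le> n div (q - 1)" using assms by (simp add: div_le_mono)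
      finally show "q ^ (l div (q - 1) + k div (q - 1)) dvd q ^ (n div (q - 1))"
        by (rule le_imp_power_dvd)
    qed
    finally show ?thesis .
  qed
  ultimately show ?thesis unfolding mu_Qpart d_def[symmetric]
    by (metis mult.assoc mult.left_commute mult_dvd_mono)
qed


lemma dn_exists: fixes b :: rat shows "\<exists>d::nat. 0 < d \<and> (\<forall>i\<in>{1..n+1}. of_nat d / (b + of_nat i) \<in> \<int>)"
proof -
  define g where "g i = max 1 (nat \<bar>fst (quotient_of (b + of_nat i))\<bar>)" for i :: nat
  define d where "d = (\<Prod>i\<in>{1..n+1}. g i)"
  have d0: "0 < d" unfolding d_def g_def by (rule prod_pos) simp
  have "of_nat d / (b + of_nat i) \<in> \<int>" if i: "i \<in> {1..n+1}" for i
  proof (cases "b + of_nat i = 0")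
    case True then show ?thesis by simp
  next
    case False
    obtain p q where pq: "quotient_of (b + of_nat i) = (p, q)" by (cases "quotient_of (b + of_nat i)") auto
    have q0: "q > 0" using quotient_of_denom_pos[OF pq] .
    have bi: "b + of_nat i = of_int p / of_int q" using quotient_of_div[OF pq] .
    have p0: "p \<noteq> 0" using False bi by auto
    have gi: "g i = nat \<bar>p\<bar>" using p0 pq by (simp add: g_def)
    have "g i dvd d" unfolding d_def by (rule dvd_prodI) (use i in auto)
    then obtain r where r: "d = g i * r" by blast
    have "(of_nat d :: rat) = of_int \<bar>p\<bar> * of_nat r" using r gi by simp
    then have e: "of_nat d / (b + of_nat i) = (of_int \<bar>p\<bar> * of_nat r) / (of_int p / of_int q)"
      using bi by simp
    show ?thesis
    proof (cases "p > 0")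
      case True
      then have "of_nat d / (b + of_nat i) = of_int (q * int r)" using e q0 by (simp add: field_simps)
      then show ?thesis by simp
    next
      case False
      then have "\<bar>p\<bar> = - p" by simp
      then have "of_nat d / (b + of_nat i) = of_int (- q * int r)" using e q0 p0 by (simp add: field_simps)
      then show ?thesis by (simp only: Ints_of_int)
    qed
  qed
  then show ?thesis using d0 by blast
qed

lemma dn_prop: "0 < dn n b \<and> (\<forall>i\<in>{1..n+1}. of_nat (dn n b) / (b + of_nat i) \<in> \<int>)"
  unfolding dn_def by (rule LeastI_ex) (rule dn_exists)

lemma of_rat_gbinomial: "of_rat (s gchoose k) = (of_rat s :: 'a::field_char_0) gchoose k"
proof -
  have "(fact k :: 'a) * of_rat (s gchoose k) = of_rat (fact k * (s gchoose k))"
    by (metis of_rat_mult of_rat_of_nat_eq of_nat_fact)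
  also have "\<dots> = of_rat (\<Prod>i = 0..<k. s - of_nat i)" by (simp add: gbinomial_mult_fact)
  also have "\<dots> = (\<Prod>i = 0..<k. of_rat s - of_nat i)" by (simp add: of_rat_prod of_rat_diff)
  also have "\<dots> = fact k * (of_rat s gchoose k)" by (simp add: gbinomial_mult_fact)
  finally show ?thesis by simp
qed

lemma na_gbinomial:
  assumes v: "nonarch_abs v"
  shows "v ((of_rat s :: 'a::field_char_0) gchoose k) \<le> inverse (v (of_nat (mu k s)))"
proof (rule na_le_inv[OF v])
  show "(of_nat (mu k s) :: 'a) \<noteq> 0" using mu_pos[of k s] by simp
  obtain z where z: "of_nat (mu k s) * (s gchoose k) = of_int z" using mu_gbinomial_int by blast
  have "(of_nat (mu k s) :: 'a) * (of_rat s gchoose k) = of_rat (of_nat (mu k s) * (s gchoose k))"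
    by (simp add: of_rat_mult of_rat_gbinomial)
  also have "\<dots> = of_int z" using z by simp
  finally show "v (of_nat (mu k s) * (of_rat s gchoose k)) \<le> 1" using na_of_int[OF v] by simp
qed

lemma na_dn:
  assumes v: "nonarch_abs v" and i: "i \<in> {1..n+1}"
  shows "v (inverse (of_rat (b + of_nat i) :: 'a::field_char_0)) \<le> inverse (v (of_nat (dn n b)))"
proof (rule na_le_inv[OF v])
  show "(of_nat (dn n b) :: 'a) \<noteq> 0" using dn_prop[of n b] by simp
  have "of_nat (dn n b) / (b + of_nat i) \<in> \<int>" using dn_prop[of n b] i by blast
  then obtain z where z: "of_nat (dn n b) / (b + of_nat i) = of_int z" by (auto elim: Ints_cases)
  have "(of_nat (dn n b) :: 'a) * inverse (of_rat (b + of_nat i)) = of_rat (of_nat (dn n b) / (b + of_nat i))"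
    by (simp add: of_rat_divide divide_inverse of_rat_mult of_rat_inverse)
  also have "\<dots> = of_int z" using z by simp
  finally show "v (of_nat (dn n b) * inverse (of_rat (b + of_nat i))) \<le> 1" using na_of_int[OF v] by simp
qed

lemma na_mu_mono:
  assumes v: "nonarch_abs v" and "l + k \<le> n"
  shows "inverse (v (of_nat (mu l s) :: 'a::field_char_0)) * inverse (v (of_nat (mu k s))) \<le> inverse (v (of_nat (mu n s)))"
proof -
  obtain c where c: "mu n s = mu l s * mu k s * c" using mu_dvd[OF assms(2), of s] by blast
  have pl: "v (of_nat (mu l s) :: 'a) > 0" "v (of_nat (mu k s) :: 'a) > 0"
    using na_pos[OF v] mu_pos by (simp_all add: of_nat_eq_0_iff)
  have "v (of_nat (mu n s) :: 'a) = v (of_nat (mu l s)) * v (of_nat (mu k s)) * v (of_nat c)"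
    using c na_mult[OF v] by simp
  also have "\<dots> \<le> v (of_nat (mu l s)) * v (of_nat (mu k s))"
    using na_of_nat[OF v, of c] pl by (simp add: mult_left_le)
  finally have le: "v (of_nat (mu n s) :: 'a) \<le> v (of_nat (mu l s)) * v (of_nat (mu k s))" .
  have pn: "v (of_nat (mu n s) :: 'a) > 0" using na_pos[OF v] mu_pos by simp
  show ?thesis using le pl pn by (simp add: field_simps inverse_eq_divide)
qed


locale L46 =
  fixes m :: nat and a b :: "'a::field_char_0 poly" and \<alpha> :: "nat \<Rightarrow> 'a"
    and s :: "nat \<Rightarrow> rat" and bm :: rat
  assumes m: "m \<ge> 2"
    and a_prod: "a = (\<Prod>i=1..m. [:- \<alpha> i, 1:])"
    and \<alpha>_dist: "inj_on \<alpha> {1..m}"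
    and b_deg: "degree b \<le> m - 1"
    and s_def: "\<And>i. i \<in> {1..m} \<Longrightarrow> of_rat (s i) = poly b (\<alpha> i) / poly (pderiv a) (\<alpha> i)"
    and bm_def: "of_rat bm = coeff b (m - 1)"
begin

definition P :: "nat \<Rightarrow> 'a poly" where "P i = (\<Prod>l\<in>{1..m} - {i}. [:- \<alpha> l, 1:])"
definition \<sigma> :: "nat \<Rightarrow> 'a" where "\<sigma> i = of_rat (s i)"

lemma a_remove: "i \<in> {1..m} \<Longrightarrow> a = [:- \<alpha> i, 1:] * P i"
  unfolding a_prod P_def by (rule prod.remove) auto

lemma P_nz: "P i \<noteq> 0" unfolding P_def by (simp add: prod_zero_iff) 

lemma lead_P: "lead_coeff (P i) = 1" unfolding P_def by (simp add: lead_coeff_prod)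

lemma deg_a: "degree a = m"
proof -
  have "degree a = (\<Sum>i\<in>{1..m}. degree [:- \<alpha> i, 1::'a:])"
    unfolding a_prod by (rule degree_prod_eq_sum_degree) auto
  then show ?thesis by simp
qed

lemma deg_P: "i \<in> {1..m} \<Longrightarrow> degree (P i) = m - 1"
proof -
  assume i: "i \<in> {1..m}"
  have "degree ([:- \<alpha> i, 1:] * P i) = degree [:- \<alpha> i, 1:] + degree (P i)"
    by (rule degree_mult_eq) (simp_all add: P_nz)
  then have "degree a = degree [:- \<alpha> i, 1:] + degree (P i)"
    using a_remove[OF i] by simp
  then show ?thesis using deg_a by simp
qed

lemma pderiv_a: "pderiv a = (\<Sum>i\<in>{1..m}. P i)"
proof -
  have d: "pderiv [:- \<alpha> i, 1:] = 1" for i by (simp add: pderiv_pCons)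
  show ?thesis unfolding a_prod P_def pderiv_prod d by simp
qed

lemma P_root: "i \<in> {1..m} \<Longrightarrow> j \<in> {1..m} \<Longrightarrow> i \<noteq> j \<Longrightarrow> poly (P i) (\<alpha> j) = 0"
  unfolding P_def by (auto simp: poly_prod prod_zero_iff)

lemma P_self: "i \<in> {1..m} \<Longrightarrow> poly (P i) (\<alpha> i) \<noteq> 0"
proof -
  assume i: "i \<in> {1..m}"
  have "poly (P i) (\<alpha> i) = (\<Prod>l\<in>{1..m} - {i}. \<alpha> i - \<alpha> l)"
    unfolding P_def poly_prod by simp
  moreover have "\<alpha> i - \<alpha> l \<noteq> 0" if "l \<in> {1..m} - {i}" for l
    using that i \<alpha>_dist by (auto dest: inj_onD)
  ultimately show ?thesis by simp
qed

lemma pderiv_a_at: "j \<in> {1..m} \<Longrightarrow> poly (pderiv a) (\<alpha> j) = poly (P j) (\<alpha> j)"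
proof -
  assume j: "j \<in> {1..m}"
  have "poly (pderiv a) (\<alpha> j) = (\<Sum>i\<in>{1..m}. poly (P i) (\<alpha> j))"
    by (simp add: pderiv_a poly_sum)
  also have "\<dots> = poly (P j) (\<alpha> j)"
  proof -
    have "(\<Sum>i\<in>{1..m}. poly (P i) (\<alpha> j)) = poly (P j) (\<alpha> j) + (\<Sum>i\<in>{1..m} - {j}. poly (P i) (\<alpha> j))"
      by (rule sum.remove) (use j in auto)
    also have "(\<Sum>i\<in>{1..m} - {j}. poly (P i) (\<alpha> j)) = 0"
      by (rule sum.neutral) (use j P_root in auto)
    finally show ?thesis by simp
  qed
  finally show ?thesis .
qed

lemma b_pf: "b = (\<Sum>i\<in>{1..m}. smult (\<sigma> i) (P i))"
proof (rule poly_eqI_degree[where A = "\<alpha> ` {1..m}"])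
  have card: "card (\<alpha> ` {1..m}) = m" using \<alpha>_dist by (simp add: card_image)
  show "degree b < card (\<alpha> ` {1..m})" using b_deg m card by simp
  have "degree (\<Sum>i\<in>{1..m}. smult (\<sigma> i) (P i)) \<le> m - 1"
  proof (rule degree_sum_le)
    fix i assume "i \<in> {1..m}"
    then show "degree (smult (\<sigma> i) (P i)) \<le> m - 1"
      using deg_P degree_smult_le by (metis order_trans order_refl)
  qed simp
  then show "degree (\<Sum>i\<in>{1..m}. smult (\<sigma> i) (P i)) < card (\<alpha> ` {1..m})" using m card by simp
  fix x assume "x \<in> \<alpha> ` {1..m}"
  then obtain j where j: "j \<in> {1..m}" "x = \<alpha> j" by blast
  have "poly (\<Sum>i\<in>{1..m}. smult (\<sigma> i) (P i)) x = (\<Sum>i\<in>{1..m}. \<sigma> i * poly (P i) (\<alpha> j))"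
    using j by (simp add: poly_sum)
  also have "\<dots> = \<sigma> j * poly (P j) (\<alpha> j) + (\<Sum>i\<in>{1..m} - {j}. \<sigma> i * poly (P i) (\<alpha> j))"
    by (rule sum.remove) (use j in auto)
  also have "(\<Sum>i\<in>{1..m} - {j}. \<sigma> i * poly (P i) (\<alpha> j)) = 0"
    by (rule sum.neutral) (use j P_root in auto)
  also have "\<sigma> j * poly (P j) (\<alpha> j) = poly b (\<alpha> j)"
    using s_def[OF j(1)] pderiv_a_at[OF j(1)] P_self[OF j(1)] by (simp add: \<sigma>_def)
  finally show "poly b x = poly (\<Sum>i\<in>{1..m}. smult (\<sigma> i) (P i)) x" using j by simp
qed

lemma bm_sum: "of_rat bm = (\<Sum>i\<in>{1..m}. \<sigma> i)"
proof -
  have "of_rat bm = (\<Sum>i\<in>{1..m}. \<sigma> i * coeff (P i) (m - 1))"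
    using bm_def b_pf by (simp add: coeff_sum)
  also have "\<dots> = (\<Sum>i\<in>{1..m}. \<sigma> i)"
  proof (rule sum.cong)
    fix i assume "i \<in> {1..m}"
    then have "coeff (P i) (m - 1) = 1" using deg_P lead_P by metis
    then show "\<sigma> i * coeff (P i) (m - 1) = \<sigma> i" by simp
  qed simp
  finally show ?thesis .
qed

end


definition Ebin :: "'a::field_char_0 \<Rightarrow> 'a \<Rightarrow> 'a fps" where
  "Ebin c x = Abs_fps (\<lambda>k. (c gchoose k) * (- x) ^ k)"

lemma Ebin_nth: "Ebin c x $ k = (c gchoose k) * (- x) ^ k"
  by (simp add: Ebin_def)

lemma Ebin_mult: "Ebin c x * Ebin d x = Ebin (c + d) x"
proof (rule fps_ext)
  fix n
  have "(Ebin c x * Ebin d x) $ n = (\<Sum>i=0..n. (c gchoose i) * (- x) ^ i * ((d gchoose (n - i)) * (- x) ^ (n - i)))"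
    by (simp add: fps_mult_nth Ebin_nth)
  also have "\<dots> = (\<Sum>i=0..n. (c gchoose i) * (d gchoose (n - i))) * (- x) ^ n"
    unfolding sum_distrib_right
  proof (rule sum.cong)
    fix i assume "i \<in> {0..n}"
    then have "(- x) ^ i * (- x) ^ (n - i) = (- x) ^ n" by (simp add: power_add[symmetric])
    then show "(c gchoose i) * (- x) ^ i * ((d gchoose (n - i)) * (- x) ^ (n - i)) =
      (c gchoose i) * (d gchoose (n - i)) * (- x) ^ n" by (metis mult.assoc mult.left_commute)
  qed simp
  also have "\<dots> = Ebin (c + d) x $ n" by (simp add: gbinomial_Vandermonde Ebin_nth)
  finally show "(Ebin c x * Ebin d x) $ n = Ebin (c + d) x $ n" .
qed

lemma Ebin_0: "Ebin 0 x = 1"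
  by (rule fps_ext) (simp add: Ebin_nth gbinomial_0_left)

lemma Ebin_1: "Ebin 1 x = fps_of_poly [:1, - x:]"
proof (rule fps_ext)
  fix n
  have "(1::'a) gchoose n = of_nat (1 choose n)" using binomial_gbinomial[of 1 n, where 'a='a] by (metis of_nat_1)
  then show "Ebin 1 x $ n = fps_of_poly [:1, - x:] $ n"
    by (cases n) (auto simp: Ebin_nth coeff_pCons split: nat.split)
qed

lemma reflect_lin: "reflect_poly [:- x, 1:] = [:1, - (x::'a::field):]"
proof (rule poly_eqI)
  fix n
  show "coeff (reflect_poly [:- x, 1:]) n = coeff [:1, - x:] n"
    by (cases n) (auto simp: coeff_reflect_poly coeff_pCons split: nat.split)
qed

lemma Ebin_deriv: "fps_deriv (Ebin c x) = fps_const (- (c * x)) * Ebin (c - 1) x"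
proof (rule fps_ext)
  fix n
  have "fps_deriv (Ebin c x) $ n = of_nat (Suc n) * (c gchoose Suc n) * (- x) ^ Suc n"
    by (simp add: Ebin_nth fps_deriv_nth mult.assoc)
  also have "\<dots> = c * ((c - 1) gchoose n) * (- x) ^ Suc n"
    by (simp only: gbinomial_absorption)
  also have "\<dots> = (fps_const (- (c * x)) * Ebin (c - 1) x) $ n"
    by (simp add: Ebin_nth)
  finally show "fps_deriv (Ebin c x) $ n = (fps_const (- (c * x)) * Ebin (c - 1) x) $ n" .
qed

definition bnd :: "('a::field \<Rightarrow> real) \<Rightarrow> (nat \<Rightarrow> real) \<Rightarrow> 'a fps \<Rightarrow> bool" where
  "bnd v W F \<longleftrightarrow> (\<forall>n. v (F $ n) \<le> W n)"

lemma bnd_mult: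
  assumes v: "nonarch_abs v" and W0: "\<And>n. 0 \<le> W n" and Wm: "\<And>i j. W i * W j \<le> W (i + j)"
    and F: "bnd v W F" and G: "bnd v W G"
  shows "bnd v W (F * G)"
  unfolding bnd_def
proof
  fix n
  show "v ((F * G) $ n) \<le> W n"
    unfolding fps_mult_nth
  proof (rule na_sum_le[OF v W0])
    fix i assume i: "i \<in> {0..n}"
    have "v (F $ i * G $ (n - i)) = v (F $ i) * v (G $ (n - i))" by (rule na_mult[OF v])
    also have "\<dots> \<le> W i * W (n - i)"
      using F G unfolding bnd_def by (intro mult_mono) (auto intro: na_nonneg[OF v] W0)
    also have "\<dots> \<le> W n" using Wm[of i "n - i"] i by simp
    finally show "v (F $ i * G $ (n - i)) \<le> W n" .
  qed
qed

lemma bnd_prod: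
  assumes v: "nonarch_abs v" and W0: "\<And>n. 0 \<le> W n" and W1: "1 \<le> W 0"
    and Wm: "\<And>i j. W i * W j \<le> W (i + j)"
    and F: "\<And>i. i \<in> A \<Longrightarrow> bnd v W (F i)"
  shows "bnd v W (\<Prod>i\<in>A. F i)"
  using F
proof (induction A rule: infinite_finite_induct)
  case (infinite A)
  show ?case unfolding bnd_def
  proof
    fix n show "v ((\<Prod>i\<in>A. F i) $ n) \<le> W n"
      using infinite W0 W1 na_one[OF v] na_zero[OF v, of 0] by (cases n) auto
  qed
next
  case empty
  show ?case unfolding bnd_def
  proof
    fix n show "v ((\<Prod>i\<in>{}. F i) $ n) \<le> W n"
      using W0 W1 na_one[OF v] na_zero[OF v, of 0] by (cases n) auto
  qed
next
  case (insert x A)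
  then show ?case using bnd_mult[OF v W0 Wm] by simp
qed


lemma Ebin_1': "Ebin 1 x = 1 + fps_const (- x) * fps_X"
proof (rule fps_ext)
  fix n show "Ebin 1 x $ n = (1 + fps_const (- x) * fps_X) $ n"
    unfolding Ebin_1 by (cases n) (auto simp: coeff_pCons split: nat.split)
qed

lemma fps_const_sum': "(\<Sum>i\<in>S. fps_const (g i)) = fps_const (\<Sum>i\<in>S. g i)"
  by (induction S rule: infinite_finite_induct) simp_all

lemma logder:
  assumes "finite S"
  shows "(\<Prod>i\<in>S. Ebin 1 (x i)) * fps_deriv (\<Prod>i\<in>S. Ebin (c i) (x i)) =
    (\<Prod>i\<in>S. Ebin (c i) (x i)) * (\<Sum>i\<in>S. fps_const (- (c i * x i)) * (\<Prod>l\<in>S - {i}. Ebin 1 (x l)))"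
  using assms
proof (induction S rule: finite_induct)
  case empty then show ?case by simp
next
  case (insert j S)
  define A where "A = (\<Prod>i\<in>S. Ebin 1 (x i))"
  define Y where "Y = (\<Prod>i\<in>S. Ebin (c i) (x i))"
  define R where "R = (\<Sum>i\<in>S. fps_const (- (c i * x i)) * (\<Prod>l\<in>S - {i}. Ebin 1 (x l)))"
  define E1 where "E1 = Ebin 1 (x j)"
  define E where "E = Ebin (c j) (x j)"
  define k where "k = fps_const (- (c j * x j))"
  have IH: "A * fps_deriv Y = Y * R" using insert.IH A_def Y_def R_def by simp
  have dE: "E1 * fps_deriv E = k * E"
    unfolding E1_def E_def k_def Ebin_deriv
    by (simp add: mult.left_commute Ebin_mult)
  have R': "(\<Sum>i\<in>insert j S. fps_const (- (c i * x i)) * (\<Prod>l\<in>insert j S - {i}. Ebin 1 (x l)))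
      = k * A + E1 * R"
  proof -
    have "(\<Sum>i\<in>insert j S. fps_const (- (c i * x i)) * (\<Prod>l\<in>insert j S - {i}. Ebin 1 (x l)))
       = k * (\<Prod>l\<in>insert j S - {j}. Ebin 1 (x l)) + (\<Sum>i\<in>S. fps_const (- (c i * x i)) * (\<Prod>l\<in>insert j S - {i}. Ebin 1 (x l)))"
      using insert by (simp add: k_def)
    also have "(\<Prod>l\<in>insert j S - {j}. Ebin 1 (x l)) = A"
      using insert A_def by (simp add: Diff_insert_absorb)
    also have "(\<Sum>i\<in>S. fps_const (- (c i * x i)) * (\<Prod>l\<in>insert j S - {i}. Ebin 1 (x l))) = E1 * R"
      unfolding R_def sum_distrib_left
    proof (rule sum.cong)
      fix i assume i: "i \<in> S"
      have "insert j S - {i} = insert j (S - {i})" using i insert by auto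
      then have "(\<Prod>l\<in>insert j S - {i}. Ebin 1 (x l)) = E1 * (\<Prod>l\<in>S - {i}. Ebin 1 (x l))"
        using insert by (simp add: E1_def)
      then show "fps_const (- (c i * x i)) * (\<Prod>l\<in>insert j S - {i}. Ebin 1 (x l)) =
          E1 * (fps_const (- (c i * x i)) * (\<Prod>l\<in>S - {i}. Ebin 1 (x l)))"
        by (simp add: mult.left_commute)
    qed simp
    finally show ?thesis .
  qed
  have "(\<Prod>i\<in>insert j S. Ebin 1 (x i)) * fps_deriv (\<Prod>i\<in>insert j S. Ebin (c i) (x i))
      = (E1 * A) * (E * fps_deriv Y + fps_deriv E * Y)"
    using insert A_def Y_def E1_def E_def by simp
  also have "\<dots> = E1 * E * (A * fps_deriv Y) + (E1 * fps_deriv E) * A * Y"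
    by (simp add: algebra_simps)
  also have "\<dots> = E * Y * (k * A + E1 * R)"
    unfolding IH dE by (simp add: algebra_simps)
  also have "\<dots> = (\<Prod>i\<in>insert j S. Ebin (c i) (x i)) *
      (\<Sum>i\<in>insert j S. fps_const (- (c i * x i)) * (\<Prod>l\<in>insert j S - {i}. Ebin 1 (x l)))"
    unfolding R' using insert E_def Y_def by simp
  finally show ?case .
qed

context L46
begin

definition Af :: "'a fps" where "Af = (\<Prod>i\<in>{1..m}. Ebin 1 (\<alpha> i))"
definition Ai :: "nat \<Rightarrow> 'a fps" where "Ai i = (\<Prod>l\<in>{1..m} - {i}. Ebin 1 (\<alpha> l))"
definition Bf :: "'a fps" where "Bf = (\<Sum>i\<in>{1..m}. fps_const (\<sigma> i) * Ai i)"
definition Y :: "'a fps" where "Y = (\<Prod>i\<in>{1..m}. Ebin (\<sigma> i) (\<alpha> i))"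
definition G :: "'a fps" where "G = (\<Prod>i\<in>{1..m}. Ebin (- 1 - \<sigma> i) (\<alpha> i))"

lemma YGA: "Y * G * Af = 1"
proof -
  have "Y * G * Af = (\<Prod>i\<in>{1..m}. Ebin (\<sigma> i) (\<alpha> i) * Ebin (- 1 - \<sigma> i) (\<alpha> i) * Ebin 1 (\<alpha> i))"
    unfolding Y_def G_def Af_def by (simp add: prod.distrib)
  also have "\<dots> = 1" by (simp add: Ebin_mult Ebin_0)
  finally show ?thesis .
qed

lemma Af_poly: "Af = fps_of_poly (reflect_poly a)"
  unfolding Af_def a_prod by (simp add: Ebin_1 reflect_poly_prod fps_of_poly_prod reflect_lin)

lemma Ai_poly: "Ai i = fps_of_poly (reflect_poly (P i))"
  unfolding Ai_def P_def by (simp add: Ebin_1 reflect_poly_prod fps_of_poly_prod reflect_lin)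

lemma Af_nth: "Af $ j = (if j \<le> m then coeff a (m - j) else 0)"
  unfolding Af_poly by (simp add: coeff_reflect_poly deg_a)

lemma Ai_nth: "i \<in> {1..m} \<Longrightarrow> Ai i $ j = (if j \<le> m - 1 then coeff (P i) (m - 1 - j) else 0)"
  unfolding Ai_poly by (simp add: coeff_reflect_poly deg_P)

lemma Bf_nth: "Bf $ j = (if j \<le> m - 1 then coeff b (m - 1 - j) else 0)"
proof -
  have "Bf $ j = (\<Sum>i\<in>{1..m}. \<sigma> i * Ai i $ j)" unfolding Bf_def by (simp add: fps_sum_nth)
  also have "\<dots> = (\<Sum>i\<in>{1..m}. \<sigma> i * (if j \<le> m - 1 then coeff (P i) (m - 1 - j) else 0))"
    by (rule sum.cong) (simp_all add: Ai_nth)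
  also have "\<dots> = (if j \<le> m - 1 then coeff b (m - 1 - j) else 0)"
    by (subst b_pf) (simp add: coeff_sum)
  finally show ?thesis .
qed

lemma Af_remove: "i \<in> {1..m} \<Longrightarrow> Af = Ebin 1 (\<alpha> i) * Ai i"
  unfolding Af_def Ai_def by (rule prod.remove) auto

lemma key: "fps_X * Af * fps_deriv Y + Bf * Y = fps_const (of_rat bm) * Af * Y"
proof -
  define R where "R = (\<Sum>i\<in>{1..m}. fps_const (- (\<sigma> i * \<alpha> i)) * Ai i)"
  have ld: "Af * fps_deriv Y = Y * R"
    unfolding Af_def Y_def R_def Ai_def by (rule logder) simp
  have "fps_X * R + Bf = (\<Sum>i\<in>{1..m}. fps_const (\<sigma> i) * (Ebin 1 (\<alpha> i) * Ai i))"
    unfolding R_def Bf_def sum_distrib_left sum.distrib[symmetric]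
  proof (rule sum.cong)
    fix i
    have c: "fps_const (- (\<sigma> i * \<alpha> i)) = fps_const (\<sigma> i) * fps_const (- \<alpha> i)"
      by (simp add: fps_const_mult)
    show "fps_X * (fps_const (- (\<sigma> i * \<alpha> i)) * Ai i) + fps_const (\<sigma> i) * Ai i =
        fps_const (\<sigma> i) * (Ebin 1 (\<alpha> i) * Ai i)"
      unfolding c Ebin_1' by (simp add: algebra_simps)
  qed simp
  also have "\<dots> = (\<Sum>i\<in>{1..m}. fps_const (\<sigma> i) * Af)"
    by (rule sum.cong) (simp_all add: Af_remove[symmetric])
  also have "\<dots> = fps_const (of_rat bm) * Af"
    by (simp add: bm_sum sum_distrib_right[symmetric] fps_const_sum')
  finally have e: "fps_X * R + Bf = fps_const (of_rat bm) * Af" .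
  have "fps_X * Af * fps_deriv Y + Bf * Y = Y * (fps_X * R + Bf)"
    by (simp add: mult.assoc ld algebra_simps)
  also have "\<dots> = fps_const (of_rat bm) * Af * Y" unfolding e by (simp add: algebra_simps)
  finally show ?thesis .
qed

end


locale L46f = L46 +
  fixes f :: "nat \<Rightarrow> 'a"
  assumes Lf: "L_image_poly a b f"
begin

definition F :: "'a fps" where "F = Abs_fps (\<lambda>k. if k = 0 then 0 else f (k - 1))"
definition Phi :: "'a fps" where "Phi = fps_X * Af * fps_deriv F + Bf * F"
definition J :: "'a fps" where "J = F * Af * G"

lemma F_nth: "F $ k = (if k = 0 then 0 else f (k - 1))" by (simp add: F_def)

lemma part1: "(fps_X * Af * fps_deriv F) $ (N + m) = (\<Sum>j\<le>degree a. of_nat (j + N) * coeff a j * f (j + N - 1))"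
proof -
  have X: "fps_X * Af * fps_deriv F = Af * (fps_X * fps_deriv F)" by (simp add: algebra_simps)
  have F1: "(fps_X * fps_deriv F) $ t = of_nat t * F $ t" for t
    by (cases t) (simp_all add: fps_deriv_nth)
  have "(fps_X * Af * fps_deriv F) $ (N + m) = (\<Sum>j=0..N + m. Af $ j * (of_nat (N + m - j) * F $ (N + m - j)))"
    unfolding X by (simp only: fps_mult_nth[of Af "fps_X * fps_deriv F"] F1)
  also have "\<dots> = (\<Sum>j=0..m. Af $ j * (of_nat (N + m - j) * F $ (N + m - j)))"
    by (rule sum.mono_neutral_right) (auto simp: Af_nth)
  also have "\<dots> = (\<Sum>j=0..m. Af $ (m + 0 - j) * (of_nat (N + m - (m + 0 - j)) * F $ (N + m - (m + 0 - j))))"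
    by (rule sum.atLeastAtMost_rev)
  also have "\<dots> = (\<Sum>j\<le>degree a. of_nat (j + N) * coeff a j * f (j + N - 1))"
    unfolding deg_a atLeast0AtMost[symmetric]
  proof (rule sum.cong)
    fix j assume j: "j \<in> {0..m}"
    then have e1: "m + 0 - j \<le> m" "m - (m + 0 - j) = j" "N + m - (m + 0 - j) = j + N" by auto
    show "Af $ (m + 0 - j) * (of_nat (N + m - (m + 0 - j)) * F $ (N + m - (m + 0 - j))) =
        of_nat (j + N) * coeff a j * f (j + N - 1)"
    proof -
      have e2: "m - (m - j) = j" "m - j \<le> m" using j by auto
      show ?thesis unfolding e1(3) using e2 by (simp add: Af_nth F_nth)
    qed
  qed simp
  finally show ?thesis .
qed

lemma part2: "(Bf * F) $ (N + m) = (\<Sum>j\<le>degree b. coeff b j * f (j + N))"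
proof -
  have m1: "m - 1 + 1 = m" using m by simp
  have "(Bf * F) $ (N + m) = (\<Sum>j=0..N + m. Bf $ j * F $ (N + m - j))"
    unfolding fps_mult_nth ..
  also have "\<dots> = (\<Sum>j=0..m - 1. Bf $ j * F $ (N + m - j))"
    by (rule sum.mono_neutral_right) (auto simp: Bf_nth)
  also have "\<dots> = (\<Sum>j=0..m - 1. Bf $ (m - 1 + 0 - j) * F $ (N + m - (m - 1 + 0 - j)))"
    by (rule sum.atLeastAtMost_rev)
  also have "\<dots> = (\<Sum>j=0..m - 1. coeff b j * f (j + N))"
  proof (rule sum.cong)
    fix j assume j: "j \<in> {0..m - 1}"
    then have e1: "m - 1 + 0 - j \<le> m - 1" "m - 1 - (m - 1 + 0 - j) = j" "N + m - (m - 1 + 0 - j) = Suc (j + N)"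
      using m by auto
    show "Bf $ (m - 1 + 0 - j) * F $ (N + m - (m - 1 + 0 - j)) = coeff b j * f (j + N)"
    proof -
      have e2: "m - Suc (m - Suc j) = j" "m - Suc j \<le> m - Suc 0" using j m by auto
      show ?thesis unfolding e1(3) using e2 by (simp add: Bf_nth F_nth)
    qed
  qed simp
  also have "\<dots> = (\<Sum>j\<le>degree b. coeff b j * f (j + N))"
    unfolding atLeast0AtMost
    by (rule sum.mono_neutral_right) (use b_deg in \<open>auto simp: coeff_eq_0\<close>)
  finally show ?thesis .
qed

lemma Phi_high: "n \<ge> m \<Longrightarrow> Phi $ n = 0"
proof -
  assume n: "n \<ge> m"
  obtain N where N: "n = N + m" using n by (metis add.commute le_add_diff_inverse)
  have "Phi $ n = L_coeff a b f N"
    unfolding N Phi_def L_coeff_def by (simp add: part1 part2)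
  then show ?thesis using Lf unfolding L_image_poly_def by simp
qed

lemma Phi_0: "Phi $ 0 = 0"
  by (simp add: Phi_def fps_mult_nth F_nth)

lemma F_YJ: "F = Y * J"
proof -
  have "F = F * (Y * G * Af)" by (simp add: YGA)
  then show ?thesis by (simp add: J_def algebra_simps)
qed

lemma J_0: "J $ 0 = 0" by (simp add: J_def fps_mult_nth F_nth)

lemma J_rel: "(G * Phi) $ n = (of_rat bm + of_nat n) * J $ n"
proof -
  define c where "c = fps_const (of_rat bm :: 'a)"
  have "Phi = J * (fps_X * Af * fps_deriv Y + Bf * Y) + fps_X * Af * Y * fps_deriv J"
    unfolding Phi_def F_YJ by (simp add: algebra_simps)
  also have "\<dots> = (Y * Af) * (c * J + fps_X * fps_deriv J)"
    unfolding key c_def by (simp add: algebra_simps)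
  finally have "G * Phi = (Y * G * Af) * (c * J + fps_X * fps_deriv J)" by (simp add: algebra_simps)
  then have "G * Phi = c * J + fps_X * fps_deriv J" by (simp add: YGA)
  then show ?thesis
    by (cases n) (simp_all add: c_def fps_deriv_nth algebra_simps)
qed

end


lemma den_rat_shift: "den_rat (of_int z - s) = den_rat s"
proof -
  obtain p q where pq: "quotient_of s = (p, q)" by (cases "quotient_of s") auto
  have q0: "q > 0" using quotient_of_denom_pos[OF pq] .
  have cop: "coprime p q" using quotient_of_coprime[OF pq] .
  have s: "s = of_int p / of_int q" using quotient_of_div[OF pq] .
  have cop2: "coprime (z * q - p) q"
  proof (rule coprimeI)
    fix c assume c1: "c dvd z * q - p" and c2: "c dvd q"
    have "c dvd z * q" using c2 by simp
    then have "c dvd z * q - (z * q - p)" using c1 by (rule dvd_diff)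
    then have "c dvd p" by simp
    then show "is_unit c" using coprime_common_divisor[OF cop _ c2] by blast
  qed
  have "of_int z - s = Rat.Fract (z * q - p) q" using q0 by (simp add: s Fract_of_int_quotient field_simps)
  then have "quotient_of (of_int z - s) = (z * q - p, q)" using q0 cop2 by (simp add: quotient_of_Fract)
  then show ?thesis using pq by (simp add: den_rat_def)
qed

lemma mu_shift: "mu n (- 1 - s) = mu n s"
  using den_rat_shift[of "-1" s] by (simp add: mu_def)

definition Nf :: "'a::field_char_0 \<Rightarrow> nat" where
  "Nf x = (SOME N. N > 0 \<and> (\<forall>v. nonarch_abs v \<longrightarrow> v (of_nat N * x) \<le> 1))"

lemma Nf_prop:
  assumes K: "number_field TYPE('a::field_char_0)"
  shows "Nf (x::'a) > 0 \<and> (\<forall>v. nonarch_abs v \<longrightarrow> v (of_nat (Nf x) * x) \<le> 1)"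
  unfolding Nf_def by (rule someI_ex) (rule nf_bound[OF K])

lemma const_bound:
  assumes K: "number_field TYPE('a::field_char_0)" and v: "nonarch_abs v"
    and D0: "D > 0" and dv: "Nf (x::'a) dvd D"
  shows "v x \<le> inverse (v (of_nat D))"
proof (rule na_le_inv[OF v])
  show "(of_nat D :: 'a) \<noteq> 0" using D0 by simp
  obtain r where r: "D = Nf x * r" using dv by blast
  have "v (of_nat D * x) = v (of_nat r) * v (of_nat (Nf x) * x)"
    using r na_mult[OF v] by (simp add: algebra_simps)
  also have "\<dots> \<le> 1 * 1"
    using na_of_nat[OF v, of r] Nf_prop[OF K, of x] v na_nonneg[OF v]
    by (intro mult_mono) auto
  finally show "v (of_nat D * x) \<le> 1" by simp
qed

context L46f
begin

definition Hv :: "('a \<Rightarrow> real) \<Rightarrow> real" where "Hv v = height_v v m \<alpha>"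
definition W :: "('a \<Rightarrow> real) \<Rightarrow> nat \<Rightarrow> real" where
  "W v n = Hv v ^ n * (\<Prod>i\<in>{1..m}. inverse (v (of_nat (mu n (s i)))))"

lemma Hv_ge1: "1 \<le> Hv v"
  unfolding Hv_def height_v_def by (rule Max_ge) auto

lemma Hv_nonneg: "0 \<le> Hv v" using Hv_ge1[of v] by linarith

lemma Hv_ge: "i \<in> {1..m} \<Longrightarrow> v (\<alpha> i) \<le> Hv v"
  unfolding Hv_def height_v_def by (rule Max_ge) auto

lemma inv_mu_ge1: "nonarch_abs v \<Longrightarrow> 1 \<le> inverse (v (of_nat (mu n r) :: 'a))"
proof -
  assume v: "nonarch_abs v"
  have "0 < v (of_nat (mu n r) :: 'a)" using na_pos[OF v] mu_pos[of n r] by simp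
  moreover have "v (of_nat (mu n r) :: 'a) \<le> 1" by (rule na_of_nat[OF v])
  ultimately show ?thesis by (simp add: one_le_inverse)
qed

lemma W_ge1: "nonarch_abs v \<Longrightarrow> 1 \<le> W v n"
proof -
  assume v: "nonarch_abs v"
  have "1 \<le> Hv v ^ n" using Hv_ge1 by simp
  moreover have "1 \<le> (\<Prod>i\<in>{1..m}. inverse (v (of_nat (mu n (s i)) :: 'a)))"
    by (rule prod_ge_1) (use inv_mu_ge1[OF v] in auto)
  ultimately show ?thesis unfolding W_def by (metis mult_mono' mult_1 order_trans zero_le_one)
qed

lemma W_mult: "nonarch_abs v \<Longrightarrow> W v i * W v j \<le> W v (i + j)"
proof -
  assume v: "nonarch_abs v"
  have "(\<Prod>l\<in>{1..m}. inverse (v (of_nat (mu i (s l)) :: 'a))) * (\<Prod>l\<in>{1..m}. inverse (v (of_nat (mu j (s l)) :: 'a)))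
      = (\<Prod>l\<in>{1..m}. inverse (v (of_nat (mu i (s l)) :: 'a)) * inverse (v (of_nat (mu j (s l)) :: 'a)))"
    by (simp add: prod.distrib)
  also have "\<dots> \<le> (\<Prod>l\<in>{1..m}. inverse (v (of_nat (mu (i + j) (s l)) :: 'a)))"
    by (rule prod_mono) (use na_mu_mono[OF v, of i j "i + j"] na_nonneg[OF v] in \<open>auto intro: mult_nonneg_nonneg\<close>)
  finally have p: "(\<Prod>l\<in>{1..m}. inverse (v (of_nat (mu i (s l)) :: 'a))) * (\<Prod>l\<in>{1..m}. inverse (v (of_nat (mu j (s l)) :: 'a)))
      \<le> (\<Prod>l\<in>{1..m}. inverse (v (of_nat (mu (i + j) (s l)) :: 'a)))" .
  have h: "0 \<le> Hv v ^ (i + j)" using Hv_nonneg by simp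
  show ?thesis unfolding W_def power_add
    using mult_left_mono[OF p h] by (simp add: power_add algebra_simps)
qed

lemma W_mono: "nonarch_abs v \<Longrightarrow> i \<le> j \<Longrightarrow> W v i \<le> W v j"
proof -
  assume v: "nonarch_abs v" and ij: "i \<le> j"
  have "W v i = W v i * 1" by simp
  also have "\<dots> \<le> W v i * W v (j - i)" using W_ge1[OF v, of i] W_ge1[OF v, of "j - i"] by simp
  also have "\<dots> \<le> W v (i + (j - i))" by (rule W_mult[OF v])
  finally show ?thesis using ij by simp
qed

lemma bnd_Ebin:
  assumes v: "nonarch_abs v" and i: "i \<in> {1..m}" and mu_eq: "\<And>n. mu n r = mu n (s i)"
  shows "bnd v (W v) (Ebin (of_rat r) (\<alpha> i))"
  unfolding bnd_def
proof
  fix n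
  have "v (Ebin (of_rat r) (\<alpha> i) $ n) = v (of_rat r gchoose n) * v (\<alpha> i) ^ n"
    by (simp add: Ebin_nth na_mult[OF v] na_power[OF v] na_uminus[OF v])
  also have "\<dots> \<le> inverse (v (of_nat (mu n (s i)))) * Hv v ^ n"
    using na_gbinomial[OF v, of r n] mu_eq[of n] Hv_ge[OF i, of v] na_nonneg[OF v]
    by (intro mult_mono power_mono) auto
  also have "\<dots> \<le> W v n"
  proof -
    have "inverse (v (of_nat (mu n (s i)) :: 'a)) \<le> (\<Prod>l\<in>{1..m}. inverse (v (of_nat (mu n (s l)) :: 'a)))"
    proof -
      have "(\<Prod>l\<in>{1..m}. inverse (v (of_nat (mu n (s l)) :: 'a))) =
          inverse (v (of_nat (mu n (s i)))) * (\<Prod>l\<in>{1..m} - {i}. inverse (v (of_nat (mu n (s l)) :: 'a)))"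
        by (rule prod.remove) (use i in auto)
      moreover have "1 \<le> (\<Prod>l\<in>{1..m} - {i}. inverse (v (of_nat (mu n (s l)) :: 'a)))"
        by (rule prod_ge_1) (use inv_mu_ge1[OF v] in auto)
      moreover have "0 \<le> inverse (v (of_nat (mu n (s i)) :: 'a))" using inv_mu_ge1[OF v] by (meson order_trans zero_le_one)
      ultimately show ?thesis using mult_left_mono[of 1 "\<Prod>l\<in>{1..m} - {i}. inverse (v (of_nat (mu n (s l)) :: 'a))" "inverse (v (of_nat (mu n (s i)) :: 'a))"] by simp
    qed
    moreover have "0 \<le> Hv v ^ n" using Hv_nonneg by simp
    ultimately show ?thesis unfolding W_def by (simp add: mult.commute mult_left_mono)
  qed
  finally show "v (Ebin (of_rat r) (\<alpha> i) $ n) \<le> W v n" .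
qed

lemma bnd_Y: "nonarch_abs v \<Longrightarrow> bnd v (W v) Y"
proof -
  assume v: "nonarch_abs v"
  show ?thesis unfolding Y_def \<sigma>_def
    by (rule bnd_prod[OF v]) (use W_ge1[OF v] W_mult[OF v] bnd_Ebin[OF v] in \<open>auto intro: order_trans[OF zero_le_one]\<close>)
qed

lemma bnd_G: "nonarch_abs v \<Longrightarrow> bnd v (W v) G"
proof -
  assume v: "nonarch_abs v"
  have e: "- 1 - \<sigma> i = of_rat (- 1 - s i)" for i by (simp add: \<sigma>_def of_rat_diff)
  show ?thesis unfolding G_def e
    by (rule bnd_prod[OF v]) (use W_ge1[OF v] W_mult[OF v] bnd_Ebin[OF v] mu_shift in \<open>auto intro: order_trans[OF zero_le_one]\<close>)
qed

end


context L46f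
begin

definition Dc :: nat where "Dc = (\<Prod>j<m. Nf (Phi $ j)) * Nf (J $ 1)"

lemma Dc_pos: assumes K: "number_field TYPE('a)" shows "Dc > 0"
  unfolding Dc_def using Nf_prop[OF K] by (simp add: prod_pos)

lemma Phi_bnd:
  assumes K: "number_field TYPE('a)" and v: "nonarch_abs v"
  shows "v (Phi $ u) \<le> inverse (v (of_nat Dc))"
proof (cases "u = 0 \<or> u \<ge> m")
  case True
  then have "Phi $ u = 0" using Phi_0 Phi_high by auto
  then show ?thesis using na_zero[OF v, of 0] na_nonneg[OF v] by simp
next
  case False
  have "Nf (Phi $ u) dvd Dc" unfolding Dc_def
    by (rule dvd_mult2, rule dvd_prodI) (use False in auto)
  then show ?thesis by (rule const_bound[OF K v Dc_pos[OF K]])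
qed

lemma J1_bnd:
  assumes K: "number_field TYPE('a)" and v: "nonarch_abs v"
  shows "v (J $ 1) \<le> inverse (v (of_nat Dc))"
  by (rule const_bound[OF K v Dc_pos[OF K]]) (simp add: Dc_def)

lemma GPhi_bnd:
  assumes K: "number_field TYPE('a)" and v: "nonarch_abs v" and t: "1 \<le> t"
  shows "v ((G * Phi) $ t) \<le> inverse (v (of_nat Dc)) * W v (t - 1)"
  unfolding fps_mult_nth
proof (rule na_sum_le[OF v])
  have c0: "0 \<le> inverse (v (of_nat Dc))" using na_nonneg[OF v] by simp
  show "0 \<le> inverse (v (of_nat Dc)) * W v (t - 1)" using c0 W_ge1[OF v, of "t - 1"] by simp
  fix j assume j: "j \<in> {0..t}"
  show "v (G $ j * Phi $ (t - j)) \<le> inverse (v (of_nat Dc)) * W v (t - 1)"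
  proof (cases "j = t")
    case True
    then show ?thesis using Phi_0 na_zero[OF v, of 0] c0 W_ge1[OF v, of "t - 1"] by simp
  next
    case False
    then have jt: "j \<le> t - 1" using j by auto
    have "v (G $ j * Phi $ (t - j)) = v (G $ j) * v (Phi $ (t - j))" by (rule na_mult[OF v])
    also have "\<dots> \<le> W v (t - 1) * inverse (v (of_nat Dc))"
      using bnd_G[OF v] W_mono[OF v jt] Phi_bnd[OF K v, of "t - j"] na_nonneg[OF v] W_ge1[OF v, of "t - 1"]
      unfolding bnd_def by (intro mult_mono) (auto intro: order_trans)
    finally show ?thesis by (simp add: mult.commute)
  qed
qed

lemma J_bnd:
  assumes K: "number_field TYPE('a)" and v: "nonarch_abs v" and bm_ok: "\<not> (bm \<in> \<int> \<and> bm < -1)"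
    and t: "1 \<le> t" "t \<le> n + 1"
  shows "v (J $ t) \<le> inverse (v (of_nat Dc)) * W v (t - 1) * inverse (v (of_nat (dn n bm)))"
proof -
  have c0: "0 \<le> inverse (v (of_nat Dc))" using na_nonneg[OF v] by simp
  have d1: "1 \<le> inverse (v (of_nat (dn n bm) :: 'a))"
  proof -
    have "0 < v (of_nat (dn n bm) :: 'a)" using na_pos[OF v] dn_prop[of n bm] by simp
    then show ?thesis using na_of_nat[OF v, of "dn n bm"] by (simp add: one_le_inverse)
  qed
  show ?thesis
  proof (cases "(of_rat bm + of_nat t :: 'a) = 0")
    case True
    then have "bm + of_nat t = 0" by (metis of_rat_0 of_rat_add of_rat_eq_iff of_rat_of_nat_eq)
    then have "bm = - of_nat t" by simp
    then have "t = 1" using bm_ok t by (cases "t \<ge> 2") auto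
    then have "v (J $ t) \<le> inverse (v (of_nat Dc))" using J1_bnd[OF K v] by simp
    also have "\<dots> \<le> inverse (v (of_nat Dc)) * W v (t - 1) * inverse (v (of_nat (dn n bm)))"
    proof -
      have "1 \<le> W v (t - 1) * inverse (v (of_nat (dn n bm) :: 'a))"
        using W_ge1[OF v, of "t - 1"] d1 by (metis mult_mono' mult_1 order_trans zero_le_one)
      then show ?thesis using c0 mult_left_mono by (metis mult.assoc mult_1_right)
    qed
    finally show ?thesis .
  next
    case False
    have "J $ t = (G * Phi) $ t * inverse (of_rat (bm + of_nat t))"
      using J_rel[of t] False by (simp add: of_rat_add field_simps)
    then have "v (J $ t) = v ((G * Phi) $ t) * v (inverse (of_rat (bm + of_nat t)))"
      using na_mult[OF v] by simp
    also have "\<dots> \<le> (inverse (v (of_nat Dc)) * W v (t - 1)) * inverse (v (of_nat (dn n bm)))"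
      using GPhi_bnd[OF K v t(1)] na_dn[OF v, of t n bm] t na_nonneg[OF v] c0 W_ge1[OF v, of "t - 1"]
      by (intro mult_mono) auto
    finally show ?thesis .
  qed
qed

lemma f_bnd:
  assumes K: "number_field TYPE('a)" and v: "nonarch_abs v" and bm_ok: "\<not> (bm \<in> \<int> \<and> bm < -1)"
    and k: "k \<le> n"
  shows "v (f k) \<le> inverse (v (of_nat Dc)) * W v n * inverse (v (of_nat (dn n bm)))"
proof -
  have c0: "0 \<le> inverse (v (of_nat Dc))" using na_nonneg[OF v] by simp
  have d0: "0 \<le> inverse (v (of_nat (dn n bm) :: 'a))" using na_nonneg[OF v] by simp
  have "f k = F $ (k + 1)" by (simp add: F_nth)
  also have "\<dots> = (\<Sum>i=0..k + 1. Y $ i * J $ (k + 1 - i))" unfolding F_YJ fps_mult_nth ..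
  finally have fk: "f k = (\<Sum>i=0..k + 1. Y $ i * J $ (k + 1 - i))" .
  have "v (\<Sum>i=0..k + 1. Y $ i * J $ (k + 1 - i)) \<le> inverse (v (of_nat Dc)) * W v n * inverse (v (of_nat (dn n bm)))"
  proof (rule na_sum_le[OF v])
    show "0 \<le> inverse (v (of_nat Dc)) * W v n * inverse (v (of_nat (dn n bm)))"
      using c0 d0 W_ge1[OF v, of n] by simp
    fix i assume i: "i \<in> {0..k + 1}"
    show "v (Y $ i * J $ (k + 1 - i)) \<le> inverse (v (of_nat Dc)) * W v n * inverse (v (of_nat (dn n bm)))"
    proof (cases "i = k + 1")
      case True
      then show ?thesis using J_0 na_zero[OF v, of 0] c0 d0 W_ge1[OF v, of n] by simp
    next
      case False
      define t where "t = k + 1 - i"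
      have t: "1 \<le> t" "t \<le> n + 1" using False i k t_def by auto
      have "v (Y $ i * J $ (k + 1 - i)) = v (Y $ i) * v (J $ t)" unfolding t_def by (rule na_mult[OF v])
      also have "\<dots> \<le> W v i * (inverse (v (of_nat Dc)) * W v (t - 1) * inverse (v (of_nat (dn n bm))))"
        using bnd_Y[OF v] J_bnd[OF K v bm_ok t] na_nonneg[OF v] W_ge1[OF v, of i] unfolding bnd_def
        by (intro mult_mono) auto
      also have "\<dots> = inverse (v (of_nat Dc)) * (W v i * W v (t - 1)) * inverse (v (of_nat (dn n bm)))"
        by (simp add: algebra_simps)
      also have "\<dots> \<le> inverse (v (of_nat Dc)) * W v n * inverse (v (of_nat (dn n bm)))"
      proof -
        have "W v i * W v (t - 1) \<le> W v (i + (t - 1))" by (rule W_mult[OF v])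
        also have "\<dots> \<le> W v n" using W_mono[OF v, of "i + (t - 1)" n] t_def False i k by simp
        finally show ?thesis using c0 d0 by (intro mult_right_mono mult_left_mono) auto
      qed
      finally show ?thesis .
    qed
  qed
  then show ?thesis using fk by simp
qed

end


theorem lemma4p6:
  fixes m :: nat and a b :: "'a::field_char_0 poly" and \<alpha> :: "nat \<Rightarrow> 'a"
    and s :: "nat \<Rightarrow> rat" and bm :: rat and f :: "nat \<Rightarrow> 'a"
  assumes K: "number_field TYPE('a)"
    and m: "m \<ge> 2"
    and a_monic: "lead_coeff a = 1" and a_deg: "degree a = m"
    and a_prod: "a = (\<Prod>i=1..m. [:- \<alpha> i, 1:])"
    and \<alpha>_dist: "inj_on \<alpha> {1..m}"
    and b_deg: "degree b \<le> m - 1"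
    and s_def: "\<And>i. i \<in> {1..m} \<Longrightarrow> of_rat (s i) = poly b (\<alpha> i) / poly (pderiv a) (\<alpha> i)"
    and s_ok: "\<And>i. i \<in> {1..m} \<Longrightarrow> \<not> (s i \<in> \<int> \<and> s i \<le> -1)"
    and bm_def: "of_rat bm = coeff b (m - 1)"
    and bm_ok: "\<not> (bm \<in> \<int> \<and> bm < -1)"
    and Lf: "L_image_poly a b f"
  shows "\<exists>D::nat. D > 0 \<and>
    (\<forall>v::'a \<Rightarrow> real. nonarch_abs v \<longrightarrow> (\<forall>n::nat. n \<ge> 1 \<longrightarrow>
       Max ((\<lambda>k. v (f k)) ` {0..n})
         \<le> inverse (v (of_nat D)) * height_v v m \<alpha> ^ n
            * (\<Prod>i=1..m. inverse (v (of_nat (mu n (s i)))))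
            * inverse (v (of_nat (dn n bm)))))"
proof -
  interpret L46f m a b \<alpha> s bm f
    by unfold_locales (use m a_prod \<alpha>_dist b_deg s_def bm_def Lf in auto)
  show ?thesis
  proof (intro exI[of _ Dc] conjI allI impI)
    show "Dc > 0" by (rule Dc_pos[OF K])
    fix v :: "'a \<Rightarrow> real" and n :: nat
    assume v: "nonarch_abs v" and n: "n \<ge> 1"
    have "Max ((\<lambda>k. v (f k)) ` {0..n}) \<le> inverse (v (of_nat Dc)) * W v n * inverse (v (of_nat (dn n bm)))"
      by (rule Max.boundedI) (use f_bnd[OF K v bm_ok] in auto)
    then show "Max ((\<lambda>k. v (f k)) ` {0..n})
         \<le> inverse (v (of_nat Dc)) * height_v v m \<alpha> ^ n
            * (\<Prod>i=1..m. inverse (v (of_nat (mu n (s i)))))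
            * inverse (v (of_nat (dn n bm)))"
      by (simp add: W_def Hv_def mult.assoc)
  qed
qed


end
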